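(* Let $\lambda$ be a non-uniform partition of $n$, and let $G\le\mathcal{S}_n$ be $\lambda$-homogeneous but not $\lambda$-transitive. Then $G$ is $2$-homogeneous, and hence primitive.
   Context: $\Omega=\{1,\ldots,n\}$. A partition of $n$ is a non-increasing sequence of positive integers with sum $n$; it is non-uniform if not all parts are equal. An ordered partition $(A_1,A_2,\ldots)$ of $\Omega$ has type $\lambda$ if $|A_i|=\lambda_i$. $G$ is $\lambda$-transitive if for any two ordered partitions $(A_i)$, $(B_i)$ of type $\lambda$ there is $g\in G$ with $A_ig=B_i$ for all $i$; $G$ is $\lambda$-homogeneous if for any two such ordered partitions there is $g\in G$ mapping the set of parts $\{A_1,A_2,\ldots\}$ onto $\{B_1,B_2,\ldots\}$. $G$ is $2$-homogeneous if it is transitive on $2$-subsets of $\Omega$. *)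

theory Defs
  imports "HOL-Algebra.Sym_Groups"
begin

definition is_partition :: "nat list \<Rightarrow> nat \<Rightarrow> bool" where
  "is_partition lam n \<longleftrightarrow> sorted_wrt (\<ge>) lam \<and> (\<forall>x\<in>set lam. 0 < x) \<and> sum_list lam = n"

definition non_uniform :: "nat list \<Rightarrow> bool" where
  "non_uniform lam \<longleftrightarrow> (\<exists>x\<in>set lam. \<exists>y\<in>set lam. x \<noteq> y)"

definition ordered_partition_of_type :: "nat \<Rightarrow> nat list \<Rightarrow> nat set list \<Rightarrow> bool" where
  "ordered_partition_of_type n lam As \<longleftrightarrow>
     length As = length lam \<and>
     (\<forall>i<length As. card (As ! i) = lam ! i) \<and>
     (\<forall>i<length As. \<forall>j<length As. i \<noteq> j \<longrightarrow> As ! i \<inter> As ! j = {}) \<and>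
     \<Union> (set As) = {1..n}"

definition lam_transitive :: "nat \<Rightarrow> nat list \<Rightarrow> (nat \<Rightarrow> nat) set \<Rightarrow> bool" where
  "lam_transitive n lam G \<longleftrightarrow>
     (\<forall>As Bs. ordered_partition_of_type n lam As \<longrightarrow> ordered_partition_of_type n lam Bs \<longrightarrow>
        (\<exists>g\<in>G. \<forall>i<length lam. g ` (As ! i) = Bs ! i))"

definition lam_homogeneous :: "nat \<Rightarrow> nat list \<Rightarrow> (nat \<Rightarrow> nat) set \<Rightarrow> bool" where
  "lam_homogeneous n lam G \<longleftrightarrow>
     (\<forall>As Bs. ordered_partition_of_type n lam As \<longrightarrow> ordered_partition_of_type n lam Bs \<longrightarrow>
        (\<exists>g\<in>G. (\<lambda>A. g ` A) ` set As = set Bs))"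

definition two_homogeneous :: "nat \<Rightarrow> (nat \<Rightarrow> nat) set \<Rightarrow> bool" where
  "two_homogeneous n G \<longleftrightarrow>
     (\<forall>X Y. X \<subseteq> {1..n} \<longrightarrow> Y \<subseteq> {1..n} \<longrightarrow> card X = 2 \<longrightarrow> card Y = 2 \<longrightarrow>
        (\<exists>g\<in>G. g ` X = Y))"

definition perm_transitive :: "nat \<Rightarrow> (nat \<Rightarrow> nat) set \<Rightarrow> bool" where
  "perm_transitive n G \<longleftrightarrow> (\<forall>x\<in>{1..n}. \<forall>y\<in>{1..n}. \<exists>g\<in>G. g x = y)"

definition is_block :: "nat \<Rightarrow> (nat \<Rightarrow> nat) set \<Rightarrow> nat set \<Rightarrow> bool" where
  "is_block n G B \<longleftrightarrow> B \<subseteq> {1..n} \<and> (\<forall>g\<in>G. g ` B = B \<or> g ` B \<inter> B = {})"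

definition primitive :: "nat \<Rightarrow> (nat \<Rightarrow> nat) set \<Rightarrow> bool" where
  "primitive n G \<longleftrightarrow> perm_transitive n G \<and>
     (\<forall>B. is_block n G B \<longrightarrow> card B \<le> 1 \<or> B = {1..n})"

end

theory Submission imports Defs begin

definition opart :: "nat set \<Rightarrow> nat list \<Rightarrow> nat set list \<Rightarrow> bool" where
  "opart S mu As \<longleftrightarrow>
     length As = length mu \<and>
     (\<forall>i<length As. card (As ! i) = mu ! i) \<and>
     (\<forall>i<length As. \<forall>j<length As. i \<noteq> j \<longrightarrow> As ! i \<inter> As ! j = {}) \<and>
     \<Union> (set As) = S"

lemma opart_Nil: "opart {} [] []" by (simp add: opart_def)

lemma opart_cons:
  assumes "opart S mu Ds" "X \<inter> S = {}" "card X = a"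
  shows "opart (X \<union> S) (a # mu) (X # Ds)"
proof -
  have sub: "\<And>i. i < length Ds \<Longrightarrow> Ds ! i \<subseteq> S" using assms(1) unfolding opart_def
    by (metis Union_upper nth_mem)
  have D: "\<And>i j. i < length Ds \<Longrightarrow> j < length Ds \<Longrightarrow> i \<noteq> j \<Longrightarrow> Ds ! i \<inter> Ds ! j = {}"
    using assms(1) unfolding opart_def by blast
  have dis: "\<forall>i<length (X # Ds). \<forall>j<length (X # Ds). i \<noteq> j \<longrightarrow> (X # Ds) ! i \<inter> (X # Ds) ! j = {}"
  proof (intro allI impI)
    fix i j assume p: "i < length (X # Ds)" "j < length (X # Ds)" "i \<noteq> j"
    show "(X # Ds) ! i \<inter> (X # Ds) ! j = {}"
    proof (cases i)
      case 0
      then obtain j' where "j = Suc j'" using p(3) by (cases j) auto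
      then show ?thesis using 0 sub[of j'] assms(2) p(2) by auto
    next
      case (Suc i')
      show ?thesis
      proof (cases j)
        case 0
        then show ?thesis using Suc sub[of i'] assms(2) p(1) by auto
      next
        case (Suc j')
        then show ?thesis using \<open>i = Suc i'\<close> D[of i' j'] p by auto
      qed
    qed
  qed
  show ?thesis using assms(1,3) dis unfolding opart_def
    by (simp add: nth_Cons split: nat.split)
qed

lemma exists_opart:
  "finite S \<Longrightarrow> card S = sum_list mu \<Longrightarrow> \<exists>Cs. opart S mu Cs"
proof (induction mu arbitrary: S)
  case Nil
  then show ?case using opart_Nil by auto
next
  case (Cons a mu)
  then obtain A where A: "A \<subseteq> S" "card A = a"
    by (metis le_add1 obtain_subset_with_card_n sum_list.Cons)
  have "finite (S - A)" using Cons by auto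
  moreover have "card (S - A) = sum_list mu"
    using Cons.prems A by (simp add: card_Diff_subset finite_subset)
  ultimately obtain Cs where "opart (S - A) mu Cs" using Cons.IH by blast
  hence "opart (A \<union> (S - A)) (a # mu) (A # Cs)"
    using opart_cons[of "S - A" mu Cs A a] A by auto
  moreover have "A \<union> (S - A) = S" using A by auto
  ultimately show ?case by auto
qed

lemma opart_insert:
  assumes "opart S mu Ds" "finite S" "j < length mu" "v \<notin> S"
  shows "opart (insert v S) (mu[j := mu ! j + 1]) (Ds[j := insert v (Ds ! j)])"
proof -
  have len: "length Ds = length mu" using assms(1) opart_def by auto
  have sub: "\<And>i. i < length Ds \<Longrightarrow> Ds ! i \<subseteq> S" using assms(1) unfolding opart_def
    by (metis Union_upper nth_mem)
  have fin: "\<And>i. i < length Ds \<Longrightarrow> finite (Ds ! i)" using sub assms(2) finite_subset by blast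
  have U: "\<Union> (set (Ds[j := insert v (Ds ! j)])) = insert v (\<Union> (set Ds))"
  proof
    show "\<Union> (set (Ds[j := insert v (Ds ! j)])) \<subseteq> insert v (\<Union> (set Ds))"
      using set_update_subset_insert[of Ds j "insert v (Ds ! j)"] len assms(3) by fastforce
    show "insert v (\<Union> (set Ds)) \<subseteq> \<Union> (set (Ds[j := insert v (Ds ! j)]))"
    proof
      fix x assume "x \<in> insert v (\<Union> (set Ds))"
      then consider "x = v" | i where "i < length Ds" "x \<in> Ds ! i"
        by (metis UnionE in_set_conv_nth insertE)
      then show "x \<in> \<Union> (set (Ds[j := insert v (Ds ! j)]))"
      proof cases
        case 1 then show ?thesis using len assms(3)
          by (metis UnionI insertI1 length_list_update nth_list_update_eq nth_mem)
      next
        case 2 then show ?thesis using len assms(3)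
          by (metis UnionI insertCI length_list_update nth_list_update nth_mem)
      qed
    qed
  qed
  show ?thesis using assms(1) unfolding opart_def
    apply (intro conjI)
       apply simp
    using len assms(3,4) sub fin
      subgoal
    proof (intro allI impI)
      fix i assume i: "i < length (Ds[j := insert v (Ds ! j)])"
      show "card (Ds[j := insert v (Ds ! j)] ! i) = mu[j := mu ! j + 1] ! i"
      proof (cases "i = j")
        case True
        have "v \<notin> Ds ! j" using sub[of j] len assms(3,4) by auto
        then show ?thesis using True fin[of j] len assms(3) assms(1) unfolding opart_def by simp
      next
        case False
        then show ?thesis using i assms(1) unfolding opart_def by simp
      qed
    qed
     subgoal
    proof (intro allI impI)
      fix i k assume i: "i < length (Ds[j := insert v (Ds ! j)])" and k: "k < length (Ds[j := insert v (Ds ! j)])"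
        and ik: "i \<noteq> k"
      have d: "Ds ! i \<inter> Ds ! k = {}" using assms(1) i k ik unfolding opart_def by simp
      have vi: "v \<notin> Ds ! i" "v \<notin> Ds ! k" using sub i k assms(4) by auto
      show "Ds[j := insert v (Ds ! j)] ! i \<inter> Ds[j := insert v (Ds ! j)] ! k = {}"
        using d vi ik len assms(3) by (cases "i = j"; cases "k = j") (auto simp: nth_list_update)
    qed
    using U apply simp
    done
qed

definition InG :: "nat set set \<Rightarrow> nat set \<Rightarrow> nat set set" where
  "InG Ga X = {e\<in>Ga. e \<subseteq> X}"

definition Es :: "nat set set \<Rightarrow> nat \<Rightarrow> nat set list \<Rightarrow> nat set set" where
  "Es Ga s L = {e\<in>Ga. \<exists>Z\<in>set L. card Z = s \<and> e \<subseteq> Z}"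

definition dg :: "nat set set \<Rightarrow> nat set \<Rightarrow> nat \<Rightarrow> nat" where
  "dg Ga T u = card {t\<in>T. {u,t} \<in> Ga}"

lemma Es_cons:
  assumes "card Y = s" "\<forall>Z\<in>set L. Y \<inter> Z = {}" "\<forall>e\<in>Ga. e \<noteq> {}"
  shows "Es Ga s (Y # L) = InG Ga Y \<union> Es Ga s L" "InG Ga Y \<inter> Es Ga s L = {}"
proof -
  show "Es Ga s (Y # L) = InG Ga Y \<union> Es Ga s L"
  proof (intro equalityI subsetI)
    fix e assume "e \<in> Es Ga s (Y # L)"
    then show "e \<in> InG Ga Y \<union> Es Ga s L" unfolding Es_def InG_def by (simp only: list.set) blast
  next
    fix e assume "e \<in> InG Ga Y \<union> Es Ga s L"
    then show "e \<in> Es Ga s (Y # L)" unfolding Es_def InG_def using assms(1) by (simp only: list.set) blast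
  qed
  show "InG Ga Y \<inter> Es Ga s L = {}"
  proof (rule ccontr)
    assume "InG Ga Y \<inter> Es Ga s L \<noteq> {}"
    then obtain e Z where ez: "e \<in> Ga" "e \<subseteq> Y" "Z \<in> set L" "e \<subseteq> Z" unfolding Es_def InG_def by blast
    have "Y \<inter> Z = {}" using assms(2) ez(3) by simp
    then have "e = {}" using ez(2,4) by auto
    then show False using assms(3) ez(1) by simp
  qed
qed

lemma Es_update:
  assumes "j < length L" "card Y \<noteq> s"
  shows "Es Ga s (L[j := Y]) = {e\<in>Ga. \<exists>i<length L. i \<noteq> j \<and> card (L!i) = s \<and> e \<subseteq> L!i}"
proof -
  have "\<And>Z. (Z \<in> set (L[j := Y]) \<and> card Z = s) \<longleftrightarrow> (\<exists>i<length L. i \<noteq> j \<and> card (L!i) = s \<and> Z = L!i)"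
  proof
    fix Z assume "Z \<in> set (L[j := Y]) \<and> card Z = s"
    then obtain i where i: "i < length L" "Z = L[j:=Y] ! i" "card Z = s" by (auto simp: in_set_conv_nth)
    then have "i \<noteq> j" using assms by auto
    then show "\<exists>i<length L. i \<noteq> j \<and> card (L!i) = s \<and> Z = L!i" using i by auto
  next
    fix Z assume "\<exists>i<length L. i \<noteq> j \<and> card (L!i) = s \<and> Z = L!i"
    then obtain i where i: "i < length L" "i \<noteq> j" "card (L!i) = s" "Z = L!i" by blast
    then have "Z = L[j:=Y] ! i" by simp
    then show "Z \<in> set (L[j := Y]) \<and> card Z = s" using i by (metis length_list_update nth_mem)
  qed
  then show ?thesis unfolding Es_def by (metis (no_types, lifting))
qed

lemma In_insert:
  assumes "u \<notin> T" "finite T" "\<forall>e\<in>Ga. card e = 2"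
  shows "card (InG Ga (insert u T)) = card (InG Ga T) + dg Ga T u"
proof -
  have eq: "InG Ga (insert u T) = InG Ga T \<union> (\<lambda>t. {u,t}) ` {t\<in>T. {u,t} \<in> Ga}"
  proof
    show "InG Ga (insert u T) \<subseteq> InG Ga T \<union> (\<lambda>t. {u,t}) ` {t\<in>T. {u,t} \<in> Ga}"
    proof
      fix e assume e: "e \<in> InG Ga (insert u T)"
      show "e \<in> InG Ga T \<union> (\<lambda>t. {u,t}) ` {t\<in>T. {u,t} \<in> Ga}"
      proof (cases "u \<in> e")
        case False
        then show ?thesis using e unfolding InG_def by auto
      next
        case True
        have "card e = 2" using e assms(3) unfolding InG_def by auto
        then obtain a b where ab: "e = {a,b}" "a \<noteq> b" by (meson card_2_iff)
        then obtain t where t: "e = {u,t}" "t \<noteq> u" using True by auto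
        then have "t \<in> T" using e unfolding InG_def by auto
        then show ?thesis using t e unfolding InG_def by auto
      qed
    qed
    show "InG Ga T \<union> (\<lambda>t. {u,t}) ` {t\<in>T. {u,t} \<in> Ga} \<subseteq> InG Ga (insert u T)"
      unfolding InG_def by auto
  qed
  have fin1: "finite (InG Ga T)" unfolding InG_def using assms(2)
    by (metis (no_types, lifting) Collect_mono_iff finite_Collect_subsets rev_finite_subset)
  have fin2: "finite {t\<in>T. {u,t} \<in> Ga}" using assms(2) by auto
  have dis: "InG Ga T \<inter> (\<lambda>t. {u,t}) ` {t\<in>T. {u,t} \<in> Ga} = {}"
    using assms(1) unfolding InG_def by auto
  have inj: "inj_on (\<lambda>t. {u,t}) {t\<in>T. {u,t} \<in> Ga}"
    using assms(1) by (auto simp: inj_on_def doubleton_eq_iff)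
  show ?thesis unfolding eq dg_def
    using card_Un_disjoint[OF fin1 finite_imageI[OF fin2] dis] card_image[OF inj] by simp
qed

lemma dg_insert:
  assumes "w \<notin> B" "finite B"
  shows "dg Ga (insert w B) u = dg Ga B u + (if {u,w} \<in> Ga then 1 else 0)"
proof -
  have "{t\<in>insert w B. {u,t} \<in> Ga} = (if {u,w} \<in> Ga then insert w {t\<in>B. {u,t} \<in> Ga} else {t\<in>B. {u,t} \<in> Ga})"
    by auto
  then show ?thesis unfolding dg_def using assms by auto
qed

lemma comb_contra:
  assumes Dinv: "\<And>T u v. T \<subseteq> {1..n} \<Longrightarrow> card T = s - 1 \<Longrightarrow> u \<in> {1..n} - T \<Longrightarrow> v \<in> {1..n} - T \<Longrightarrow> dg Ga T u = dg Ga T v"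
    and s2: "2 \<le> s" and ns: "s + 2 \<le> n"
    and xyz: "x \<in> {1..n}" "y \<in> {1..n}" "z \<in> {1..n}" "x \<noteq> y" "x \<noteq> z" "y \<noteq> z"
    and xy: "{x,y} \<in> Ga" and xz: "{x,z} \<notin> Ga"
  shows False
proof -
  have "card ({1..n} - {x,y,z}) = n - 3" using xyz by (simp add: card_Diff_subset)
  moreover have "s - 1 \<le> n - 3" using ns s2 by linarith
  ultimately obtain A where A: "A \<subseteq> {1..n} - {x,y,z}" "card A = s - 1"
    using obtain_subset_with_card_n[of "s - 1" "{1..n} - {x,y,z}"] by metis
  have finA: "finite A" using A(1) finite_subset by blast
  have i: "dg Ga A y = dg Ga A z" using Dinv[OF _ A(2), of y z] A xyz by auto
  have each: "{y,x'} \<in> Ga \<and> {z,x'} \<notin> Ga" if x': "x' \<in> A" for x'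
  proof -
    let ?B = "A - {x'}"
    have finB: "finite ?B" using finA by auto
    have xB: "x \<notin> ?B" using A by auto
    have cT: "card (insert x ?B) = s - 1"
    proof -
      have "card (insert x ?B) = Suc (card ?B)" using xB finB by simp
      also have "card ?B = card A - 1" using x' finA by simp
      finally show ?thesis using A(2) x' finA s2 card_gt_0_iff by fastforce
    qed
    have "dg Ga (insert x ?B) y = dg Ga (insert x ?B) z"
      using Dinv[OF _ cT, of y z] A xyz x' by auto
    then have 1: "dg Ga ?B y + 1 = dg Ga ?B z"
      using dg_insert[OF xB finB, of Ga y] dg_insert[OF xB finB, of Ga z] xy xz
      by (simp add: insert_commute)
    have AA: "A = insert x' ?B" using x' by auto
    have 2: "dg Ga ?B y + (if {y,x'} \<in> Ga then 1 else 0) = dg Ga ?B z + (if {z,x'} \<in> Ga then 1 else 0)"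
      using i dg_insert[of x' ?B Ga y] dg_insert[of x' ?B Ga z] finB AA by simp
    show ?thesis using 1 2 by (auto split: if_splits)
  qed
  have e1: "{t\<in>A. {y,t} \<in> Ga} = A" using each by auto
  have e2: "{t\<in>A. {z,t} \<in> Ga} = {}" using each by auto
  have "dg Ga A y = s - 1" using e1 A(2) unfolding dg_def by simp
  moreover have "dg Ga A z = 0" by (simp only: dg_def e2 card.empty)
  ultimately show False using i s2 by simp
qed

lemma hom_le:
  assumes g: "g permutes {1..n}" and cl: "\<forall>e\<in>Ga. g ` e \<in> Ga" and GaP: "Ga \<subseteq> Pow {1..n}"
    and As: "opart {1..n} lam As" and img: "(\<lambda>A. g ` A) ` set As = set Bs"
  shows "card (Es Ga s As) \<le> card (Es Ga s Bs)"
proof -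
  have inj: "inj_on g {1..n}" using g by (rule permutes_inj_on)
  have sub: "\<And>Z. Z \<in> set As \<Longrightarrow> Z \<subseteq> {1..n}" using As unfolding opart_def by auto
  have map: "(\<lambda>e. g ` e) ` Es Ga s As \<subseteq> Es Ga s Bs"
  proof
    fix e' assume "e' \<in> (\<lambda>e. g ` e) ` Es Ga s As"
    then obtain e Z where ez: "e \<in> Ga" "Z \<in> set As" "card Z = s" "e \<subseteq> Z" "e' = g ` e"
      unfolding Es_def by blast
    have "g ` Z \<in> set Bs" using img ez(2) by blast
    moreover have "card (g ` Z) = s" using card_image[OF inj_on_subset[OF inj sub[OF ez(2)]]] ez(3) by simp
    moreover have "g ` e \<subseteq> g ` Z" using ez(4) by (rule image_mono)
    moreover have "g ` e \<in> Ga" using cl ez(1) by blast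
    ultimately show "e' \<in> Es Ga s Bs" unfolding Es_def using ez(5) by blast
  qed
  have injE: "inj_on (\<lambda>e. g ` e) (Es Ga s As)"
    by (rule inj_on_subset[OF inj_on_image_Pow[OF inj]]) (use GaP in \<open>auto simp: Es_def\<close>)
  have finGa: "finite Ga" using finite_subset[OF GaP] by simp
  have fin: "finite (Es Ga s Bs)" using finGa unfolding Es_def by simp
  show ?thesis using card_inj_on_le[OF injE map fin] .
qed

lemma swap_inv:
  assumes H: "\<And>As Bs. opart {1..n} lam As \<Longrightarrow> opart {1..n} lam Bs \<Longrightarrow> card (Es Ga s As) \<le> card (Es Ga s Bs)"
  and Ga2: "\<forall>e\<in>Ga. card e = 2" and finGa: "finite Ga"
  and lam: "lam = s # rest" "j < length rest" "rest ! j \<noteq> s" "0 < rest ! j" "sum_list lam = n" "1 \<le> s"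
  and T: "T \<subseteq> {1..n}" "card T = s - 1" and uv: "u \<in> {1..n} - T" "v \<in> {1..n} - T" "u \<noteq> v"
  shows "card (InG Ga (insert u T)) = card (InG Ga (insert v T))"
proof -
  define W where "W = {1..n} - T - {u,v}"
  define mu where "mu = rest[j := rest!j - 1]"
  have finT: "finite T" using T(1) finite_subset by blast
  have finW: "finite W" unfolding W_def by simp
  have W2: "W = {1..n} - (T \<union> {u,v})" unfolding W_def by blast
  have TU: "T \<union> {u,v} \<subseteq> {1..n}" using T(1) uv by blast
  have "card W = n - card (T \<union> {u,v})" unfolding W2 using card_Diff_subset[OF _ TU] finT by simp
  also have "card (T \<union> {u,v}) = s + 1" using uv finT T(2) lam(6) by (simp add: card_insert_if)
  finally have cW0: "card W = n - (s + 1)" .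
  have "sum_list mu = sum_list rest - 1" unfolding mu_def using sum_list_update[OF lam(2), of "rest!j - 1"] lam(4) by simp
  then have cW: "card W = sum_list mu" using cW0 lam(5) lam(1) by simp
  obtain Ds where Ds: "opart W mu Ds" using exists_opart[OF finW cW] by blast
  have lenmu: "j < length mu" using lam(2) mu_def by simp
  have lenDs: "length Ds = length rest" using Ds opart_def mu_def by simp
  have mu_back: "mu[j := mu ! j + 1] = rest" unfolding mu_def using lam(2,4) by simp
  define E0 where "E0 = {e\<in>Ga. \<exists>i<length Ds. i \<noteq> j \<and> card (Ds!i) = s \<and> e \<subseteq> Ds!i}"
  have key: "opart {1..n} lam (insert w T # Ds[j := insert w' (Ds!j)]) \<and>
      card (Es Ga s (insert w T # Ds[j := insert w' (Ds!j)])) = card (InG Ga (insert w T)) + card E0"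
    if ww: "w \<in> {1..n} - T" "w' \<in> {1..n} - T" "w \<noteq> w'" "{w,w'} = {u,v}" for w w'
  proof -
    have w'W: "w' \<notin> W" unfolding W_def using ww by auto
    have D1: "opart (insert w' W) rest (Ds[j := insert w' (Ds!j)])"
      using opart_insert[OF Ds finW lenmu w'W] mu_back by simp
    have disj: "insert w T \<inter> insert w' W = {}" unfolding W_def using ww by auto
    have cX: "card (insert w T) = s" using ww finT T(2) lam(6) by simp
    have D2: "opart (insert w T \<union> insert w' W) (s # rest) (insert w T # Ds[j := insert w' (Ds!j)])"
      by (rule opart_cons[OF D1 disj cX])
    have U: "insert w T \<union> insert w' W = {1..n}" unfolding W_def using ww T(1) by auto
    have P1: "opart {1..n} lam (insert w T # Ds[j := insert w' (Ds!j)])" using D2 U lam(1) by simp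
    have subs: "\<forall>Z\<in>set (Ds[j := insert w' (Ds!j)]). insert w T \<inter> Z = {}"
    proof
      fix Z assume "Z \<in> set (Ds[j := insert w' (Ds!j)])"
      then have "Z \<subseteq> insert w' W" using D1 unfolding opart_def by auto
      then show "insert w T \<inter> Z = {}" using disj by auto
    qed
    have ne: "\<forall>e\<in>Ga. e \<noteq> {}" using Ga2 by auto
    have cj: "card (insert w' (Ds!j)) \<noteq> s"
    proof -
      from D1 have c0: "\<forall>i<length (Ds[j := insert w' (Ds!j)]). card (Ds[j := insert w' (Ds!j)] ! i) = rest ! i"
        unfolding opart_def by blast
      have "card (Ds[j := insert w' (Ds!j)] ! j) = rest ! j" using c0 lam(2) lenDs by (metis length_list_update)
      then show ?thesis using lam(2,3) lenDs by simp
    qed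
    have E1: "Es Ga s (Ds[j := insert w' (Ds!j)]) = E0"
      unfolding E0_def using Es_update[of j Ds "insert w' (Ds!j)" s Ga] lenDs lam(2) cj by simp
    have fin1: "finite (InG Ga (insert w T))" using finGa unfolding InG_def by simp
    have fin2: "finite E0" using finGa unfolding E0_def by simp
    have "card (Es Ga s (insert w T # Ds[j := insert w' (Ds!j)])) = card (InG Ga (insert w T)) + card E0"
      using Es_cons[OF cX subs ne] E1 card_Un_disjoint[OF fin1 fin2] by simp
    then show ?thesis using P1 by blast
  qed
  note k1 = key[of u v] and k2 = key[of v u]
  have vu: "{v,u} = {u,v}" by blast
  have a: "opart {1..n} lam (insert u T # Ds[j := insert v (Ds!j)])"
    "card (Es Ga s (insert u T # Ds[j := insert v (Ds!j)])) = card (InG Ga (insert u T)) + card E0"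
    using k1 uv by simp_all
  have b: "opart {1..n} lam (insert v T # Ds[j := insert u (Ds!j)])"
    "card (Es Ga s (insert v T # Ds[j := insert u (Ds!j)])) = card (InG Ga (insert v T)) + card E0"
    using k2 uv vu by simp_all
  show ?thesis using H[OF a(1) b(1)] H[OF b(1) a(1)] a(2) b(2) by linarith
qed

lemma opt_eq: "ordered_partition_of_type n lam As = opart {1..n} lam As"
  unfolding ordered_partition_of_type_def opart_def by simp

lemma find_xyz:
  assumes "{a,b} \<in> Ga" "{c,d} \<notin> Ga" "a \<noteq> b" "c \<noteq> d" "a\<in>S" "b\<in>S" "c\<in>S" "d\<in>S"
  shows "\<exists>x y z. x\<in>S \<and> y\<in>S \<and> z\<in>S \<and> x\<noteq>y \<and> x\<noteq>z \<and> y\<noteq>z \<and> {x,y}\<in>Ga \<and> {x,z}\<notin>Ga"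
proof -
  have ne: "{a,b} \<noteq> {c,d}" using assms(1,2) by metis
  have ba: "{b,a} = {a,b}" "{d,c} = {c,d}" by blast+
  consider "c = a" | "c = b" | "d = a" | "d = b" | "c \<noteq> a" "c \<noteq> b" "d \<noteq> a" "d \<noteq> b" by blast
  then show ?thesis
  proof cases
    case 1
    then have "b \<noteq> d" using ne by blast
    then show ?thesis using 1 assms by (intro exI[of _ a] exI[of _ b] exI[of _ d]) simp
  next
    case 2
    then have "a \<noteq> d" using ne ba by metis
    then show ?thesis using 2 assms ba by (intro exI[of _ b] exI[of _ a] exI[of _ d]) simp
  next
    case 3
    then have "b \<noteq> c" using ne ba by metis
    then show ?thesis using 3 assms ba by (intro exI[of _ a] exI[of _ b] exI[of _ c]) simp
  next
    case 4
    then have "a \<noteq> c" using ne ba by metis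
    then show ?thesis using 4 assms ba by (intro exI[of _ b] exI[of _ a] exI[of _ c]) simp
  next
    case 5
    show ?thesis
    proof (cases "{a,c} \<in> Ga")
      case True
      have "{c,a} \<in> Ga" using True by (metis insert_commute)
      then show ?thesis using 5 assms by (intro exI[of _ c] exI[of _ a] exI[of _ d]) simp
    next
      case False
      then show ?thesis using 5 assms by (intro exI[of _ a] exI[of _ b] exI[of _ c]) simp
    qed
  qed
qed

lemma th2:
  assumes "two_homogeneous n G" "a \<in> {1..n}" "b \<in> {1..n}" "c \<in> {1..n}" "d \<in> {1..n}" "a \<noteq> b" "c \<noteq> d"
  shows "\<exists>g\<in>G. g ` {a,b} = {c,d}"
proof -
  have "{a,b} \<subseteq> {1..n}" "{c,d} \<subseteq> {1..n}" "card {a,b} = 2" "card {c,d} = 2" using assms by auto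
  then show ?thesis using assms(1) unfolding two_homogeneous_def by blast
qed

lemma two_hom_prim:
  assumes th: "two_homogeneous n G" and n3: "3 \<le> n" and Gp: "\<And>g. g\<in>G \<Longrightarrow> g permutes {1..n}"
    and Gm: "\<And>g h. g\<in>G \<Longrightarrow> h\<in>G \<Longrightarrow> g \<circ> h \<in> G" and Gid: "id \<in> G"
  shows "primitive n G"
proof -
  have tr: "perm_transitive n G"
    unfolding perm_transitive_def
  proof (intro ballI)
    fix x y assume x: "x \<in> {1..n}" and y: "y \<in> {1..n}"
    show "\<exists>g\<in>G. g x = y"
    proof (cases "x = y")
      case True then show ?thesis using Gid by (metis id_apply)
    next
      case False
      have "card ({1..n} - {x,y}) = n - 2" using x y False by (simp add: card_Diff_subset)
      then have "card ({1..n} - {x,y}) \<noteq> 0" using n3 by simp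
      then have "{1..n} - {x,y} \<noteq> {}" by (metis card.empty)
      then obtain w where w: "w \<in> {1..n}" "w \<noteq> x" "w \<noteq> y" by blast
      have "\<exists>g\<in>G. g ` {x,y} = {w,y}" by (rule th2[OF th]) (use x y w False in auto)
      then obtain h where h: "h \<in> G" "h ` {x,y} = {w,y}" by blast
      have "\<exists>g\<in>G. g ` {x,w} = {y,w}" by (rule th2[OF th]) (use x y w False in auto)
      then obtain k where k: "k \<in> G" "k ` {x,w} = {y,w}" by blast
      have hx: "h x = w \<or> h x = y" using h(2) by blast
      have kx: "k x = y \<or> (k x = w \<and> k w = y)"
      proof -
        have "k x \<in> {y,w}" "k w \<in> {y,w}" using k(2) by blast+
        moreover have "y \<in> k ` {x,w}" using k(2) by blast
        ultimately show ?thesis by auto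
      qed
      show ?thesis
      proof (cases "h x = y")
        case True then show ?thesis using h(1) by blast
      next
        case hF: False
        then have "h x = w" using hx by blast
        show ?thesis
        proof (cases "k x = y")
          case True then show ?thesis using k(1) by blast
        next
          case False
          then have "k w = y" using kx by blast
          then have "(k \<circ> h) x = y" using \<open>h x = w\<close> by simp
          then show ?thesis using Gm[OF k(1) h(1)] by blast
        qed
      qed
    qed
  qed
  have bl: "card B \<le> 1 \<or> B = {1..n}" if B: "is_block n G B" for B
  proof (rule ccontr)
    assume "\<not> (card B \<le> 1 \<or> B = {1..n})"
    then have c2: "2 \<le> card B" and ne: "B \<noteq> {1..n}" by auto
    have Bs: "B \<subseteq> {1..n}" using B is_block_def by blast
    obtain z where z: "z \<in> {1..n}" "z \<notin> B" using Bs ne by blast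
    have finB: "finite B" using Bs finite_subset by blast
    have "\<not> (\<forall>a\<in>B. \<forall>b\<in>B. a = b)" using c2 card_le_Suc0_iff_eq[OF finB] by auto
    then obtain x y where xy: "x \<in> B" "y \<in> B" "x \<noteq> y" by blast
    have "x \<noteq> z" using xy z by blast
    have "\<exists>g\<in>G. g ` {x,y} = {x,z}" by (rule th2[OF th]) (use xy z Bs \<open>x \<noteq> z\<close> in auto)
    then obtain g where g: "g \<in> G" "g ` {x,y} = {x,z}" by blast
    have "x \<in> g ` B" "z \<in> g ` B" using g(2) xy by blast+
    then have "g ` B \<inter> B \<noteq> {}" using xy by blast
    then have "g ` B = B" using B g(1) unfolding is_block_def by blast
    then show False using \<open>z \<in> g ` B\<close> z by blast
  qed
  show ?thesis unfolding primitive_def using tr bl by blast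
qed

lemma two_list:
  assumes "length As = 2" obtains A0 A1 where "As = [A0,A1]"
proof (cases As)
  case Nil then show ?thesis using assms by simp
next
  case (Cons A0 r)
  then show ?thesis
  proof (cases r)
    case Nil then show ?thesis using assms Cons by simp
  next
    case (Cons A1 r')
    then have "r' = []" using assms \<open>As = A0 # r\<close> by simp
    then show ?thesis using that \<open>As = A0 # r\<close> Cons by simp
  qed
qed

lemma trans21:
  assumes lam: "lam = [s,1]" and s1: "s \<noteq> 1" and hom: "lam_homogeneous n lam G"
    and Gp: "\<And>g. g\<in>G \<Longrightarrow> g permutes {1..n}"
  shows "lam_transitive n lam G"
  unfolding lam_transitive_def
proof (intro allI impI)
  fix As Bs assume A: "ordered_partition_of_type n lam As" and B: "ordered_partition_of_type n lam Bs"
  obtain g where g: "g \<in> G" "(\<lambda>A. g ` A) ` set As = set Bs" using hom A B unfolding lam_homogeneous_def by blast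
  have lA: "length As = 2" and lB: "length Bs = 2" using A B lam unfolding ordered_partition_of_type_def by auto
  obtain A0 A1 where As: "As = [A0,A1]" using lA two_list by blast
  obtain B0 B1 where Bs: "Bs = [B0,B1]" using lB two_list by blast
  have cA: "card A0 = s" "card A1 = 1"
    using A lam As unfolding ordered_partition_of_type_def by (metis lA nth_Cons_0 nth_Cons_Suc zero_less_numeral One_nat_def one_less_numeral_iff semiring_norm(76))+
  have cB: "card B0 = s" "card B1 = 1"
    using B lam Bs unfolding ordered_partition_of_type_def by (metis lB nth_Cons_0 nth_Cons_Suc zero_less_numeral One_nat_def one_less_numeral_iff semiring_norm(76))+
  have U: "\<Union> (set As) = {1..n}" using A unfolding ordered_partition_of_type_def by blast
  have sA: "A0 \<subseteq> {1..n}" "A1 \<subseteq> {1..n}" using U As by auto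
  have inj: "inj_on g {1..n}" using Gp[OF g(1)] by (rule permutes_inj_on)
  have c0: "card (g ` A0) = s" using card_image[OF inj_on_subset[OF inj sA(1)]] cA by simp
  have c1: "card (g ` A1) = 1" using card_image[OF inj_on_subset[OF inj sA(2)]] cA by simp
  have m0: "g ` A0 \<in> set Bs" "g ` A1 \<in> set Bs" using g(2) As by (metis imageI list.set_intros(1) list.set_intros(2))+
  have n0: "g ` A0 \<noteq> B1" using c0 cB s1 by metis
  have n1: "g ` A1 \<noteq> B0" using c1 cB s1 by metis
  have e0: "g ` A0 = B0" using m0(1) n0 Bs by simp
  have e1: "g ` A1 = B1" using m0(2) n1 Bs by simp
  have "\<forall>i<length lam. g ` (As ! i) = Bs ! i"
  proof (intro allI impI)
    fix i assume "i < length lam"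
    then have "i = 0 \<or> i = 1" using lam by auto
    then show "g ` (As ! i) = Bs ! i" using e0 e1 As Bs by auto
  qed
  then show "\<exists>g\<in>G. \<forall>i<length lam. g ` (As ! i) = Bs ! i" using g(1) by blast
qed

theorem lemma4p2:
  fixes n :: nat and lam :: "nat list" and G :: "(nat \<Rightarrow> nat) set"
  assumes "is_partition lam n"
    and "non_uniform lam"
    and "subgroup G (sym_group n)"
    and "lam_homogeneous n lam G"
    and "\<not> lam_transitive n lam G"
  shows "two_homogeneous n G \<and> primitive n G"
proof -
  have Gp: "\<And>g. g \<in> G \<Longrightarrow> g permutes {1..n}"
    using subgroup.subset[OF assms(3)] by (auto simp: sym_group_def)
  have Gm: "\<And>g h. g \<in> G \<Longrightarrow> h \<in> G \<Longrightarrow> g \<circ> h \<in> G"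
    using subgroup.m_closed[OF assms(3)] by (simp add: sym_group_def)
  have Gid: "id \<in> G" using subgroup.one_closed[OF assms(3)] by (simp add: sym_group_def)
  obtain s rest where lam: "lam = s # rest" using assms(2) unfolding non_uniform_def by (cases lam) auto
  have le: "\<forall>x\<in>set rest. x \<le> s" using assms(1) lam unfolding is_partition_def by simp
  have pos: "\<forall>x\<in>set lam. 0 < x" using assms(1) unfolding is_partition_def by simp
  have nsum: "n = s + sum_list rest" using assms(1) lam unfolding is_partition_def by simp
  obtain t where t: "t \<in> set rest" "t \<noteq> s"
  proof -
    obtain x y where xy: "x \<in> set lam" "y \<in> set lam" "x \<noteq> y" using assms(2) unfolding non_uniform_def by blast
    show ?thesis
    proof (cases "x = s")
      case True
      then have "y \<in> set rest" "y \<noteq> s" using xy lam by auto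
      then show ?thesis using that by blast
    next
      case False
      then have "x \<in> set rest" using xy lam by auto
      then show ?thesis using that False by blast
    qed
  qed
  have tpos: "0 < t" using pos t(1) lam by simp
  have s2: "2 \<le> s" using le t tpos by fastforce
  obtain j where j: "j < length rest" "rest ! j = t" using t(1) by (metis in_set_conv_nth)
  have tsum: "t \<le> sum_list rest" using member_le_sum_list[OF t(1)] by simp
  have ns: "s + 2 \<le> n"
  proof (rule ccontr)
    assume "\<not> s + 2 \<le> n"
    then have s1: "sum_list rest = 1" using nsum tsum tpos by linarith
    have "rest = [1]"
    proof (cases rest)
      case Nil then show ?thesis using t(1) by simp
    next
      case (Cons a r)
      have apos: "0 < a" using pos lam Cons by simp
      have e: "a + sum_list r = 1" using s1 Cons by simp
      then have "a = 1" "sum_list r = 0" using apos by linarith+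
      moreover have "r = []"
      proof (rule ccontr)
        assume "r \<noteq> []"
        then obtain b where "b \<in> set r" by (meson list.set_sel(1))
        moreover have "\<forall>x\<in>set r. x = 0" using \<open>sum_list r = 0\<close> by (simp add: sum_list_eq_0_iff)
        moreover have "0 < b" using pos lam Cons \<open>b \<in> set r\<close> by simp
        ultimately show False by fastforce
      qed
      ultimately show ?thesis using Cons by simp
    qed
    then have "lam = [s,1]" using lam by simp
    moreover have "s \<noteq> 1" using s2 by simp
    ultimately have "lam_transitive n lam G" using trans21[OF _ _ assms(4) Gp] by blast
    then show False using assms(5) by blast
  qed
  have two: "two_homogeneous n G"
  proof (rule ccontr)
    assume "\<not> two_homogeneous n G"
    have "\<exists>X0 Y0. X0 \<subseteq> {1..n} \<and> Y0 \<subseteq> {1..n} \<and> card X0 = 2 \<and> card Y0 = 2 \<and> (\<forall>g\<in>G. g ` X0 \<noteq> Y0)"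
    proof (rule ccontr)
      assume nex: "\<not> (\<exists>X0 Y0. X0 \<subseteq> {1..n} \<and> Y0 \<subseteq> {1..n} \<and> card X0 = 2 \<and> card Y0 = 2 \<and> (\<forall>g\<in>G. g ` X0 \<noteq> Y0))"
      have "two_homogeneous n G" unfolding two_homogeneous_def
      proof (intro allI impI)
        fix X Y assume h: "X \<subseteq> {1..n}" "Y \<subseteq> {1..n}" "card X = 2" "card Y = 2"
        show "\<exists>g\<in>G. g ` X = Y"
        proof (rule ccontr)
          assume "\<not> (\<exists>g\<in>G. g ` X = Y)"
          then have "\<forall>g\<in>G. g ` X \<noteq> Y" by simp
          then have c: "X \<subseteq> {1..n} \<and> Y \<subseteq> {1..n} \<and> card X = 2 \<and> card Y = 2 \<and> (\<forall>g\<in>G. g ` X \<noteq> Y)"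
            using h by simp
          have "\<exists>X0 Y0. X0 \<subseteq> {1..n} \<and> Y0 \<subseteq> {1..n} \<and> card X0 = 2 \<and> card Y0 = 2 \<and> (\<forall>g\<in>G. g ` X0 \<noteq> Y0)"
            by (rule exI[of _ X], rule exI[of _ Y], rule c)
          then show False using nex by contradiction
        qed
      qed
      then show False using \<open>\<not> two_homogeneous n G\<close> by contradiction
    qed
    then obtain X0 Y0 where XY: "X0 \<subseteq> {1..n}" "Y0 \<subseteq> {1..n}" "card X0 = 2" "card Y0 = 2"
      and no: "\<forall>g\<in>G. g ` X0 \<noteq> Y0" by blast
    define Ga where "Ga = (\<lambda>g. g ` X0) ` G"
    have GaP: "Ga \<subseteq> Pow {1..n}"
    proof
      fix e assume "e \<in> Ga"
      then obtain g where g: "g \<in> G" "e = g ` X0" unfolding Ga_def by blast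
      have "g ` X0 \<subseteq> g ` {1..n}" using XY(1) by (rule image_mono)
      also have "g ` {1..n} = {1..n}" using Gp[OF g(1)] by (rule permutes_image)
      finally show "e \<in> Pow {1..n}" using g(2) by simp
    qed
    have finGa: "finite Ga" using finite_subset[OF GaP] by simp
    have Ga2: "\<forall>e\<in>Ga. card e = 2"
    proof
      fix e assume "e \<in> Ga"
      then obtain g where g: "g \<in> G" "e = g ` X0" unfolding Ga_def by blast
      have "inj_on g X0" using Gp[OF g(1)] by (rule permutes_inj_on)
      then show "card e = 2" using g(2) XY(3) card_image[OF \<open>inj_on g X0\<close>] by simp
    qed
    have cl: "\<forall>e\<in>Ga. g ` e \<in> Ga" if g: "g \<in> G" for g
    proof
      fix e assume "e \<in> Ga"
      then obtain h where h: "h \<in> G" "e = h ` X0" unfolding Ga_def by blast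
      have "g ` e = (g \<circ> h) ` X0" using h(2) by (simp add: image_comp)
      then show "g ` e \<in> Ga" unfolding Ga_def using Gm[OF g h(1)] by blast
    qed
    have X0in: "X0 \<in> Ga" unfolding Ga_def
    proof (rule image_eqI[where x=id])
      show "X0 = id ` X0" by simp
      show "id \<in> G" by (rule Gid)
    qed
    have Y0out: "Y0 \<notin> Ga"
    proof
      assume "Y0 \<in> Ga"
      then obtain g where "g \<in> G" "Y0 = g ` X0" unfolding Ga_def by blast
      then show False using no by metis
    qed
    have H: "card (Es Ga s As) \<le> card (Es Ga s Bs)"
      if A: "opart {1..n} lam As" and B: "opart {1..n} lam Bs" for As Bs
    proof -
      have "\<exists>g\<in>G. (\<lambda>A. g ` A) ` set As = set Bs"
        using assms(4) A B unfolding lam_homogeneous_def opt_eq by blast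
      then obtain g where g: "g \<in> G" "(\<lambda>A. g ` A) ` set As = set Bs" by blast
      show ?thesis by (rule hom_le[OF Gp[OF g(1)] cl[OF g(1)] GaP A g(2)])
    qed
    have Dinv: "dg Ga T u = dg Ga T v"
      if T: "T \<subseteq> {1..n}" "card T = s - 1" and uv: "u \<in> {1..n} - T" "v \<in> {1..n} - T" for T u v
    proof (cases "u = v")
      case True then show ?thesis by simp
    next
      case False
      have finT: "finite T" using T(1) finite_subset by blast
      have sl: "sum_list lam = n" using assms(1) unfolding is_partition_def by simp
      have "card (InG Ga (insert u T)) = card (InG Ga (insert v T))"
        by (rule swap_inv[OF H Ga2 finGa lam j(1) _ _ sl _ T uv False]) (use j t tpos s2 in auto)
      moreover have "card (InG Ga (insert u T)) = card (InG Ga T) + dg Ga T u"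
        using In_insert[OF _ finT Ga2] uv by simp
      moreover have "card (InG Ga (insert v T)) = card (InG Ga T) + dg Ga T v"
        using In_insert[OF _ finT Ga2] uv by simp
      ultimately show ?thesis by simp
    qed
    obtain a b where ab: "X0 = {a,b}" "a \<noteq> b" using card_2_iff[THEN iffD1, OF XY(3)] by blast
    obtain c d where cd: "Y0 = {c,d}" "c \<noteq> d" using card_2_iff[THEN iffD1, OF XY(4)] by blast
    have "\<exists>x y z. x\<in>{1..n} \<and> y\<in>{1..n} \<and> z\<in>{1..n} \<and> x\<noteq>y \<and> x\<noteq>z \<and> y\<noteq>z \<and> {x,y}\<in>Ga \<and> {x,z}\<notin>Ga"
    proof (rule find_xyz[of a b Ga c d "{1..n}"])
      show "{a,b} \<in> Ga" using X0in ab by simp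
      show "{c,d} \<notin> Ga" using Y0out cd by simp
      show "a \<noteq> b" "c \<noteq> d" using ab cd by simp_all
      show "a \<in> {1..n}" "b \<in> {1..n}" using ab XY(1) by auto
      show "c \<in> {1..n}" "d \<in> {1..n}" using cd XY(2) by auto
    qed
    then obtain x y z where xyz: "x\<in>{1..n}" "y\<in>{1..n}" "z\<in>{1..n}" "x\<noteq>y" "x\<noteq>z" "y\<noteq>z"
      "{x,y}\<in>Ga" "{x,z}\<notin>Ga" by blast
    show False by (rule comb_contra[OF Dinv s2 ns xyz])
  qed
  have "primitive n G" using two_hom_prim[OF two _ Gp Gm Gid] ns s2 by simp
  then show ?thesis using two by simp
qed

end
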